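(* Let $R:\mathbb C^{\mathrm{op}}\to\mathbf{Grpd}$ be a directed restriction species and let $\mu$ be the Möbius function of the incidence algebra of the associated decomposition space $\mathbf R$. Then for every $R$-structure $Q=(P,X)$ (with $P$ a finite poset and $X\in R[P]$), \[ \mu(Q)=\begin{cases}(-1)^n & \text{if the underlying poset $P$ of $Q$ is discrete with $n$ elements},\\ 0&\text{otherwise.}\end{cases} \]
   Context: Let $\mathbb C$ be the category of finite posets and convex maps (maps which are isomorphisms onto a convex subposet, i.e. a subset $S$ such that $x\le y\le z$ with $x,z\in S$ implies $y\in S$). A directed restriction species is a functor $R:\mathbb C^{\mathrm{op}}\to\mathbf{Grpd}$; for a convex subposet $S\subseteq P$ and $X\in R[P]$ write $X|_S\in R[S]$ for the restriction. An $R$-structure is a pair $(P,X)$ with $P$ a finite poset and $X\in R[P]$; the groupoid $\mathbf R_1$ consists of $R$-structures. The associated decomposition space $\mathbf R$ has $\mathbf R_n$ the groupoid of $n$-layered finite posets (monotone maps $P\to\{1,\dots,n\}$) equipped with an $R$-structure on $P$. Its incidence algebra (after homotopy cardinality) consists of functions $\varphi$ from isomorphism classes of $R$-structures to $\mathbb Q$ with convolution \[(\varphi*\psi)(P,X)=\sum_{l:P\to\{1,2\}\text{ monotone}}\varphi\big(P_1,X|_{P_1}\big)\,\psi\big(P_2,X|_{P_2}\big),\quad P_i=l^{-1}(i),\] unit $\delta(P,X)=1$ if $P=\emptyset$ and $0$ otherwise; the Möbius function $\mu$ is the convolution inverse of the zeta function $\zeta\equiv1$. *)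

theory Defs
  imports Complex_Main "HOL-Library.FuncSet"
begin

definition fin_poset :: "'a set \<Rightarrow> 'a rel \<Rightarrow> bool" where
  "fin_poset S r \<longleftrightarrow> finite S \<and> partial_order_on S r"

definition restr_rel :: "'a rel \<Rightarrow> 'a set \<Rightarrow> 'a rel" where
  "restr_rel r T = r \<inter> (T \<times> T)"

definition convex_sub :: "'a set \<Rightarrow> 'a rel \<Rightarrow> 'a set \<Rightarrow> bool" where
  "convex_sub S r T \<longleftrightarrow> T \<subseteq> S \<and>
     (\<forall>x\<in>T. \<forall>y\<in>S. \<forall>z\<in>T. (x, y) \<in> r \<and> (y, z) \<in> r \<longrightarrow> y \<in> T)"

text \<open>A directed restriction species (object part): Rs S r is the set of
  R-structures on the poset (S, r); res S r T X is the restriction X|_T of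
  X \<in> Rs S r to a convex subposet T.\<close>
definition dir_restriction_species ::
  "('a set \<Rightarrow> 'a rel \<Rightarrow> 'x set) \<Rightarrow> ('a set \<Rightarrow> 'a rel \<Rightarrow> 'a set \<Rightarrow> 'x \<Rightarrow> 'x) \<Rightarrow> bool" where
  "dir_restriction_species Rs res \<longleftrightarrow>
     (\<forall>S r X T. fin_poset S r \<and> X \<in> Rs S r \<and> convex_sub S r T \<longrightarrow>
        res S r T X \<in> Rs T (restr_rel r T)) \<and>
     (\<forall>S r X. fin_poset S r \<and> X \<in> Rs S r \<longrightarrow> res S r S X = X) \<and>
     (\<forall>S r X T U. fin_poset S r \<and> X \<in> Rs S r \<and> convex_sub S r T \<and>
        convex_sub T (restr_rel r T) U \<longrightarrow>
        res T (restr_rel r T) U (res S r T X) = res S r U X)"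

definition mono_2layer :: "'a set \<Rightarrow> 'a rel \<Rightarrow> ('a \<Rightarrow> nat) set" where
  "mono_2layer S r = {l \<in> S \<rightarrow>\<^sub>E {1, 2}. \<forall>x\<in>S. \<forall>y\<in>S. (x, y) \<in> r \<longrightarrow> l x \<le> l y}"

definition conv ::
  "('a set \<Rightarrow> 'a rel \<Rightarrow> 'a set \<Rightarrow> 'x \<Rightarrow> 'x) \<Rightarrow>
   ('a set \<Rightarrow> 'a rel \<Rightarrow> 'x \<Rightarrow> rat) \<Rightarrow> ('a set \<Rightarrow> 'a rel \<Rightarrow> 'x \<Rightarrow> rat) \<Rightarrow>
   'a set \<Rightarrow> 'a rel \<Rightarrow> 'x \<Rightarrow> rat" where
  "conv res \<phi> \<psi> S r X =
     (\<Sum>l\<in>mono_2layer S r.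
        (let P1 = {x\<in>S. l x = 1}; P2 = {x\<in>S. l x = 2} in
          \<phi> P1 (restr_rel r P1) (res S r P1 X) * \<psi> P2 (restr_rel r P2) (res S r P2 X)))"

definition zeta_fn :: "'a set \<Rightarrow> 'a rel \<Rightarrow> 'x \<Rightarrow> rat" where
  "zeta_fn S r X = 1"

definition delta_fn :: "'a set \<Rightarrow> 'a rel \<Rightarrow> 'x \<Rightarrow> rat" where
  "delta_fn S r X = (if S = {} then 1 else 0)"

definition is_moebius ::
  "('a set \<Rightarrow> 'a rel \<Rightarrow> 'x set) \<Rightarrow> ('a set \<Rightarrow> 'a rel \<Rightarrow> 'a set \<Rightarrow> 'x \<Rightarrow> 'x) \<Rightarrow>
   ('a set \<Rightarrow> 'a rel \<Rightarrow> 'x \<Rightarrow> rat) \<Rightarrow> bool" where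
  "is_moebius Rs res \<mu> \<longleftrightarrow>
     (\<forall>S r X. fin_poset S r \<and> X \<in> Rs S r \<longrightarrow>
        conv res \<mu> zeta_fn S r X = delta_fn S r X \<and>
        conv res zeta_fn \<mu> S r X = delta_fn S r X)"

end

theory Submission
  imports Defs
begin

definition fval :: "'a set \<Rightarrow> 'a rel \<Rightarrow> rat" where
  "fval S r = (if r = Id_on S then (-1) ^ card S else 0)"

lemma minimal_exists:
  assumes "fin_poset P r" "P \<noteq> {}"
  shows "\<exists>m\<in>P. \<forall>y\<in>P. (y, m) \<in> r \<longrightarrow> y = m"
proof -
  from assms obtain a where a: "a \<in> P" by auto
  define D where "D x = {y\<in>P. (y, x) \<in> r}" for x
  obtain m where m: "m \<in> P" and mmin: "\<And>z. z \<in> P \<Longrightarrow> card (D m) \<le> card (D z)"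
    using ex_has_least_nat[of "\<lambda>x. x \<in> P" a "\<lambda>x. card (D x)"] a by blast
  have po: "refl_on P r" "trans r" "antisym r" "r \<subseteq> P \<times> P" and fin: "finite P"
    using assms(1) partial_order_onD unfolding fin_poset_def by blast+
  show ?thesis
  proof (intro bexI[OF _ m] ballI impI)
    fix y assume y: "y \<in> P" "(y, m) \<in> r"
    show "y = m"
    proof (rule ccontr)
      assume ne: "y \<noteq> m"
      have "D y \<subseteq> D m" using y po(2) unfolding D_def trans_def by blast
      moreover have "m \<in> D m" using m po(1) unfolding D_def refl_on_def by blast
      moreover have "m \<notin> D y" using y ne po(3) unfolding D_def antisym_def by blast
      ultimately have "D y \<subset> D m" by blast
      hence "card (D y) < card (D m)" using fin by (intro psubset_card_mono) (auto simp: D_def)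
      with mmin[OF y(1)] show False by simp
    qed
  qed
qed

lemma finite_M: "finite P \<Longrightarrow> finite (mono_2layer P r)"
  unfolding mono_2layer_def by (rule finite_subset[OF _ finite_PiE[of P "\<lambda>_. {1::nat,2}"]]) auto

lemma comb_nonempty:
  assumes fp: "fin_poset P r" and ne: "P \<noteq> {}"
  shows "(\<Sum>l\<in>mono_2layer P r. fval {x\<in>P. l x = 1} (restr_rel r {x\<in>P. l x = 1})) = 0"
proof -
  have po: "refl_on P r" "trans r" "antisym r" "r \<subseteq> P \<times> P" and fin: "finite P"
    using fp partial_order_onD unfolding fin_poset_def by blast+
  obtain m where m: "m \<in> P" and mmin: "\<And>y. y \<in> P \<Longrightarrow> (y, m) \<in> r \<Longrightarrow> y = m"
    using minimal_exists[OF fp ne] by blast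
  define M where "M = mono_2layer P r"
  define A where "A l = {x\<in>P. l x = (1::nat)}" for l
  define good where "good l \<longleftrightarrow> restr_rel r (A l) = Id_on (A l)" for l
  define g where "g l = fval (A l) (restr_rel r (A l))" for l
  define tg where "tg l = l(m := 3 - l m)" for l :: "'a \<Rightarrow> nat"
  define \<sigma> where "\<sigma> l = (if good l then tg l else l)" for l
  have Mdef: "l \<in> M \<longleftrightarrow> l \<in> P \<rightarrow>\<^sub>E {1,2} \<and> (\<forall>x\<in>P. \<forall>y\<in>P. (x, y) \<in> r \<longrightarrow> l x \<le> l y)" for l
    unfolding M_def mono_2layer_def by auto
  have lm: "l m = 1 \<or> l m = 2" if "l \<in> M" for l using that m unfolding Mdef by auto
  have tgM: "tg l \<in> M" if l: "l \<in> M" and gl: "good l" for l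
  proof -
    have ext: "tg l \<in> P \<rightarrow>\<^sub>E {1,2}" using l lm[OF l] m unfolding Mdef tg_def by (auto simp: PiE_def extensional_def Pi_def)
    have "tg l x \<le> tg l y" if xy: "x \<in> P" "y \<in> P" "(x, y) \<in> r" for x y
    proof (cases "x = m")
      case True
      show ?thesis
      proof (cases "y = m")
        case False
        have "l y = 1 \<or> l y = 2" using l xy unfolding Mdef by (auto simp: PiE_def)
        moreover have False if "l y = 1"
        proof -
          have "l m \<le> l y" using l xy True unfolding Mdef by auto
          hence "l m = 1" using lm[OF l] that by auto
          hence "(m, y) \<in> restr_rel r (A l)" using xy True that m unfolding restr_rel_def A_def by auto
          thus False using gl False unfolding good_def by auto
        qed
        ultimately show ?thesis using True False lm[OF l] unfolding tg_def by auto
      qed (simp add: True)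
    next
      case False
      hence "y \<noteq> m" using mmin xy by blast
      thus ?thesis using False l xy unfolding Mdef tg_def by auto
    qed
    thus ?thesis using ext unfolding Mdef by blast
  qed
  have tgA: "A (tg l) = (if l m = 1 then A l - {m} else insert m (A l))" if l: "l \<in> M" for l
    using lm[OF l] m unfolding A_def tg_def by auto
  have tggood: "good (tg l)" if l: "l \<in> M" and gl: "good l" for l
  proof (cases "l m = 1")
    case True
    show ?thesis using gl unfolding good_def tgA[OF l] True restr_rel_def by (auto simp: Id_on_def)
  next
    case False
    hence l2: "l m = 2" using lm[OF l] by auto
    have "restr_rel r (insert m (A l)) = Id_on (insert m (A l))"
    proof (intro set_eqI iffI)
      fix p assume p: "p \<in> restr_rel r (insert m (A l))"
      then obtain x y where pxy: "p = (x, y)" "(x, y) \<in> r" "x \<in> insert m (A l)" "y \<in> insert m (A l)"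
        unfolding restr_rel_def by auto
      have AP: "A l \<subseteq> P" unfolding A_def by auto
      show "p \<in> Id_on (insert m (A l))"
      proof (cases "x = m")
        case xm: True
        show ?thesis
        proof (cases "y = m")
          case False
          hence "y \<in> A l" using pxy by auto
          hence "l y = 1" "y \<in> P" unfolding A_def by auto
          moreover have "l m \<le> l y" using l pxy xm m \<open>y \<in> P\<close> unfolding Mdef by auto
          ultimately show ?thesis using l2 by simp
        qed (use pxy xm in auto)
      next
        case xnm: False
        hence xA: "x \<in> A l" using pxy by auto
        show ?thesis
        proof (cases "y = m")
          case True
          then show ?thesis using mmin[of x] xA AP pxy xnm by auto
        next
          case False
          hence "(x, y) \<in> restr_rel r (A l)" using pxy xA unfolding restr_rel_def by auto
          thus ?thesis using gl pxy unfolding good_def by auto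
        qed
      qed
    next
      fix p assume "p \<in> Id_on (insert m (A l))"
      then obtain x where "p = (x, x)" "x \<in> insert m (A l)" by (auto simp: Id_on_def)
      moreover have "x \<in> P" using calculation m unfolding A_def by auto
      ultimately show "p \<in> restr_rel r (insert m (A l))" using po(1) unfolding restr_rel_def refl_on_def by auto
    qed
    thus ?thesis using False unfolding good_def tgA[OF l] by simp
  qed
  have finA: "finite (A l)" for l using fin unfolding A_def by auto
  have gflip: "g (\<sigma> l) = - g l" if l: "l \<in> M" for l
  proof (cases "good l")
    case True
    have "card (A (tg l)) = (if l m = 1 then card (A l) - 1 else card (A l) + 1)"
      using tgA[OF l] finA m by (auto simp: A_def card_insert_if)
    moreover have "l m = 1 \<Longrightarrow> card (A l) \<ge> 1" using finA[of l] m
      by (metis (mono_tags, lifting) A_def One_nat_def Suc_leI card_gt_0_iff empty_iff mem_Collect_eq)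
    ultimately have "((-1::rat) ^ card (A (tg l))) = - ((-1) ^ card (A l))"
      by (cases "l m = 1") (auto simp: power_diff)
    thus ?thesis using True tggood[OF l True] unfolding g_def \<sigma>_def fval_def good_def by simp
  next
    case False
    thus ?thesis unfolding g_def \<sigma>_def fval_def good_def by simp
  qed
  have \<sigma>M: "\<sigma> l \<in> M" if "l \<in> M" for l using tgM that unfolding \<sigma>_def by auto
  have \<sigma>\<sigma>: "\<sigma> (\<sigma> l) = l" if l: "l \<in> M" for l
  proof (cases "good l")
    case True
    have "tg (tg l) = l" using lm[OF l] unfolding tg_def by auto
    thus ?thesis using True tggood[OF l True] unfolding \<sigma>_def by simp
  qed (simp add: \<sigma>_def)
  have bij: "bij_betw \<sigma> M M" by (rule bij_betw_byWitness[where f'=\<sigma>]) (use \<sigma>\<sigma> \<sigma>M in auto)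
  have "sum g M = sum (\<lambda>l. g (\<sigma> l)) M" using sum.reindex_bij_betw[OF bij, of g] by simp
  also have "\<dots> = - sum g M" using gflip by (simp add: sum_negf)
  finally have "sum g M = 0" by simp
  thus ?thesis unfolding g_def A_def M_def .
qed

lemma downset_facts:
  assumes fp: "fin_poset P r" and l: "l \<in> mono_2layer P r"
  shows "convex_sub P r {x\<in>P. l x = 1}"
    and "fin_poset {x\<in>P. l x = 1} (restr_rel r {x\<in>P. l x = 1})"
proof -
  have po: "refl_on P r" "trans r" "antisym r" "r \<subseteq> P \<times> P" and fin: "finite P"
    using fp partial_order_onD unfolding fin_poset_def by blast+
  have lv: "\<And>x. x \<in> P \<Longrightarrow> l x = 1 \<or> l x = 2" and mono: "\<And>x y. x \<in> P \<Longrightarrow> y \<in> P \<Longrightarrow> (x, y) \<in> r \<Longrightarrow> l x \<le> l y"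
    using l unfolding mono_2layer_def by (auto simp: PiE_def Pi_def)
  show "convex_sub P r {x\<in>P. l x = 1}"
    unfolding convex_sub_def
  proof (intro conjI ballI impI)
    fix x y z assume "x \<in> {x \<in> P. l x = 1}" "y \<in> P" "z \<in> {x \<in> P. l x = 1}" "(x, y) \<in> r \<and> (y, z) \<in> r"
    thus "y \<in> {x \<in> P. l x = 1}" using mono[of y z] lv[of y] by auto
  qed auto
  show "fin_poset {x\<in>P. l x = 1} (restr_rel r {x\<in>P. l x = 1})"
    using po fin unfolding fin_poset_def partial_order_on_def preorder_on_def restr_rel_def
      refl_on_def trans_def antisym_def by auto
qed

theorem corollary3p5:
  fixes Rs :: "'a set \<Rightarrow> 'a rel \<Rightarrow> 'x set"
    and res :: "'a set \<Rightarrow> 'a rel \<Rightarrow> 'a set \<Rightarrow> 'x \<Rightarrow> 'x"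
    and \<mu> :: "'a set \<Rightarrow> 'a rel \<Rightarrow> 'x \<Rightarrow> rat"
  assumes "dir_restriction_species Rs res"
    and "is_moebius Rs res \<mu>"
    and "fin_poset P r" and "X \<in> Rs P r"
  shows "\<mu> P r X = (if r = Id_on P then (-1) ^ card P else 0)"
proof -
  have sp1: "\<And>S r X T. fin_poset S r \<Longrightarrow> X \<in> Rs S r \<Longrightarrow> convex_sub S r T \<Longrightarrow> res S r T X \<in> Rs T (restr_rel r T)"
   and sp2: "\<And>S r X. fin_poset S r \<Longrightarrow> X \<in> Rs S r \<Longrightarrow> res S r S X = X"
    using assms(1) unfolding dir_restriction_species_def by blast+
  have mo: "\<And>S r X. fin_poset S r \<Longrightarrow> X \<in> Rs S r \<Longrightarrow> conv res \<mu> zeta_fn S r X = delta_fn S r X"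
    using assms(2) unfolding is_moebius_def by blast
  have "\<mu> P r X = fval P r" using assms(3,4)
  proof (induct "card P" arbitrary: P r X rule: less_induct)
    case less
    note fp = less.prems(1) and XR = less.prems(2)
    have po: "refl_on P r" "trans r" "antisym r" "r \<subseteq> P \<times> P" and fin: "finite P"
      using fp partial_order_onD unfolding fin_poset_def by blast+
    define M where "M = mono_2layer P r"
    define A where "A l = {x\<in>P. l x = (1::nat)}" for l
    define l0 where "l0 = (\<lambda>x\<in>P. 1::nat)"
    have l0M: "l0 \<in> M" unfolding M_def mono_2layer_def l0_def by auto
    have Al0: "A l0 = P" unfolding A_def l0_def by auto
    have rP: "restr_rel r P = r" using po(4) unfolding restr_rel_def by auto
    have finM: "finite M" using finite_M[OF fin] unfolding M_def .
    have sub: "A l \<subset> P" if l: "l \<in> M - {l0}" for l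
    proof -
      have "A l \<noteq> P"
      proof
        assume "A l = P"
        hence "l = l0" using l unfolding A_def l0_def M_def mono_2layer_def
          by (intro ext) (auto simp: PiE_def extensional_def)
        thus False using l by auto
      qed
      thus ?thesis unfolding A_def by auto
    qed
    have IH: "\<mu> (A l) (restr_rel r (A l)) (res P r (A l) X) = fval (A l) (restr_rel r (A l))"
      if l: "l \<in> M - {l0}" for l
    proof -
      have lM: "l \<in> mono_2layer P r" using l M_def by auto
      show ?thesis
        using less.hyps[OF psubset_card_mono[OF fin sub[OF l]] downset_facts(2)[OF fp lM, folded A_def]
          sp1[OF fp XR downset_facts(1)[OF fp lM, folded A_def]]] .
    qed
    have "delta_fn P r X = (\<Sum>l\<in>M. \<mu> (A l) (restr_rel r (A l)) (res P r (A l) X))"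
      using mo[OF fp XR] unfolding conv_def Let_def zeta_fn_def M_def A_def by simp
    also have "\<dots> = \<mu> P r X + (\<Sum>l\<in>M - {l0}. fval (A l) (restr_rel r (A l)))"
      using sum.remove[OF finM l0M, of "\<lambda>l. \<mu> (A l) (restr_rel r (A l)) (res P r (A l) X)"]
        IH Al0 rP sp2[OF fp XR] by simp
    finally have e1: "delta_fn P r X = \<mu> P r X + (\<Sum>l\<in>M - {l0}. fval (A l) (restr_rel r (A l)))" .
    have e2: "delta_fn P r X = fval P r + (\<Sum>l\<in>M - {l0}. fval (A l) (restr_rel r (A l)))"
    proof (cases "P = {}")
      case True
      have "M - {l0} = {}" using l0M True unfolding M_def mono_2layer_def by auto
      moreover have "r = {}" using po(4) True by auto
      ultimately show ?thesis using True by (simp only: sum.empty) (simp add: delta_fn_def fval_def)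
    next
      case False
      have "(\<Sum>l\<in>M. fval (A l) (restr_rel r (A l))) = 0"
        using comb_nonempty[OF fp False] unfolding M_def A_def .
      thus ?thesis using sum.remove[OF finM l0M, of "\<lambda>l. fval (A l) (restr_rel r (A l))"] Al0 rP False
        by (simp add: delta_fn_def)
    qed
    show ?case using e1 e2 by simp
  qed
  thus ?thesis unfolding fval_def .
qed

end
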